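(* With the notation of the context, let $u\in C^2(\Omega)$, let $w$ be a unit vector, and let $C_r,C_b$ be constants such that $d_r,d_b>0$. If $f_r(t)=f_b(t)$ for some $t\in\Omega$, then $\nu_u(t)=e$.
   Context: Let $\Omega\subset\mathbb R^2$, $e=(0,0,1)$, $n_b>n_r>1$. For $\kappa>1$ put $\Phi_\kappa(s)=s-\sqrt{\kappa^2-1+s^2}$. For $u\in C^2(\Omega)$ let $\nu_u(t)=(-\nabla u(t),1)/\sqrt{1+|\nabla u(t)|^2}$. For $c\in\{r,b\}$: $\lambda_c(t)=\Phi_{n_c}(e\cdot\nu_u(t))$, $m_c(t)=\frac1{n_c}\big(e-\lambda_c(t)\nu_u(t)\big)$ (a unit vector), $d_c(t)=\dfrac{C_c-(e-w)\cdot(t,u(t))}{n_c-w\cdot m_c(t)}$, $f_c(t)=(t,u(t))+d_c(t)m_c(t)$. *)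

theory Defs
  imports "HOL-Analysis.Analysis"
begin

definition e3 :: "real^3" where
  "e3 = vector [0, 0, 1]"

definition grad :: "(real^2 \<Rightarrow> real) \<Rightarrow> real^2 \<Rightarrow> real^2" where
  "grad u t = (THE D. GDERIV u t :> D)"

definition C2_on :: "(real^2) set \<Rightarrow> (real^2 \<Rightarrow> real) \<Rightarrow> bool" where
  "C2_on \<Omega> u \<longleftrightarrow>
     (\<forall>t\<in>\<Omega>. u differentiable (at t)) \<and>
     (\<forall>t\<in>\<Omega>. grad u differentiable (at t)) \<and>
     (\<forall>h. continuous_on \<Omega> (\<lambda>t. frechet_derivative (grad u) (at t) h))"

definition Phi :: "real \<Rightarrow> real \<Rightarrow> real" where
  "Phi \<kappa> s = s - sqrt (\<kappa>\<^sup>2 - 1 + s\<^sup>2)"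

definition nu :: "(real^2 \<Rightarrow> real) \<Rightarrow> real^2 \<Rightarrow> real^3" where
  "nu u t = (1 / sqrt (1 + (norm (grad u t))\<^sup>2)) *\<^sub>R
              vector [- (grad u t $ 1), - (grad u t $ 2), 1]"

definition graph_pt :: "(real^2 \<Rightarrow> real) \<Rightarrow> real^2 \<Rightarrow> real^3" where
  "graph_pt u t = vector [t $ 1, t $ 2, u t]"

definition lam :: "real \<Rightarrow> (real^2 \<Rightarrow> real) \<Rightarrow> real^2 \<Rightarrow> real" where
  "lam n u t = Phi n (e3 \<bullet> nu u t)"

definition mdir :: "real \<Rightarrow> (real^2 \<Rightarrow> real) \<Rightarrow> real^2 \<Rightarrow> real^3" where
  "mdir n u t = (1 / n) *\<^sub>R (e3 - lam n u t *\<^sub>R nu u t)"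

definition dist_c :: "real \<Rightarrow> real \<Rightarrow> real^3 \<Rightarrow> (real^2 \<Rightarrow> real) \<Rightarrow> real^2 \<Rightarrow> real" where
  "dist_c n C w u t = (C - (e3 - w) \<bullet> graph_pt u t) / (n - w \<bullet> mdir n u t)"

definition fmap :: "real \<Rightarrow> real \<Rightarrow> real^3 \<Rightarrow> (real^2 \<Rightarrow> real) \<Rightarrow> real^2 \<Rightarrow> real^3" where
  "fmap n C w u t = graph_pt u t + dist_c n C w u t *\<^sub>R mdir n u t"

end

theory Submission
  imports Defs
begin

lemma inner3: "(x::real^3) \<bullet> y = x$1*y$1 + x$2*y$2 + x$3*y$3"
  by (simp add: inner_vec_def sum_3)

lemma norm2sq: "(norm (x::real^2))\<^sup>2 = (x$1)\<^sup>2 + (x$2)\<^sup>2"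
  unfolding power2_norm_eq_inner by (simp add: inner_vec_def sum_2 power2_eq_square)

lemma nu_props:
  shows "nu u t \<bullet> nu u t = 1" and "e3 \<bullet> nu u t > 0" and "e3 \<bullet> e3 = 1"
proof -
  let ?g = "grad u t"
  define s where "s = sqrt (1 + (norm ?g)\<^sup>2)"
  have s0: "s > 0" unfolding s_def by (simp add: add_pos_nonneg)
  have ss: "s\<^sup>2 = 1 + (?g$1)\<^sup>2 + (?g$2)\<^sup>2" unfolding s_def by (simp add: norm2sq)
  have nu: "nu u t = (1/s) *\<^sub>R vector [- (?g $ 1), - (?g $ 2), 1]" unfolding nu_def s_def by simp
  have "nu u t \<bullet> nu u t = ((?g$1)\<^sup>2 + (?g$2)\<^sup>2 + 1) / s\<^sup>2"
    unfolding nu inner3 by (simp add: vector_3 power2_eq_square add_divide_distrib)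
  moreover have "s\<^sup>2 \<noteq> 0" using s0 by simp
  ultimately show "nu u t \<bullet> nu u t = 1" using ss by (simp add: add.commute add.left_commute)
  show "e3 \<bullet> nu u t > 0" unfolding nu inner3 e3_def using s0 by (simp add: vector_3)
  show "e3 \<bullet> e3 = 1" unfolding inner3 e3_def by (simp add: vector_3)
qed

lemma mdir_unit:
  assumes "1 < n"
  shows "mdir n u t \<bullet> mdir n u t = 1"
proof -
  let ?v = "nu u t"
  define c where "c = e3 \<bullet> ?v"
  define l where "l = lam n u t"
  have l: "l = c - sqrt (n\<^sup>2 - 1 + c\<^sup>2)" unfolding l_def lam_def Phi_def c_def by simp
  have nn: "n\<^sup>2 - 1 + c\<^sup>2 \<ge> 0" using assms
  proof -
    have "1 \<le> n\<^sup>2" using assms by (simp add: one_le_power)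
    then show ?thesis using zero_le_power2[of c] by linarith
  qed
  have sq: "(sqrt (n\<^sup>2 - 1 + c\<^sup>2))\<^sup>2 = n\<^sup>2 - 1 + c\<^sup>2" using nn by simp
  have "(e3 - l *\<^sub>R ?v) \<bullet> (e3 - l *\<^sub>R ?v) = e3 \<bullet> e3 - 2 * l * c + l\<^sup>2 * (?v \<bullet> ?v)"
    unfolding c_def by (simp add: inner_diff_left inner_diff_right inner_commute power2_eq_square algebra_simps)
  also have "\<dots> = 1 - 2*l*c + l\<^sup>2" using nu_props by simp
  also have "\<dots> = n\<^sup>2" unfolding l using sq by (simp add: power2_eq_square algebra_simps)
  finally have h: "(e3 - l *\<^sub>R ?v) \<bullet> (e3 - l *\<^sub>R ?v) = n\<^sup>2" .
  have "mdir n u t \<bullet> mdir n u t = (1/n)^2 * ((e3 - l *\<^sub>R ?v) \<bullet> (e3 - l *\<^sub>R ?v))"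
    unfolding mdir_def l_def by (simp add: power2_eq_square)
  then show ?thesis using h assms by (simp add: power2_eq_square)
qed

theorem lemma3p2:
  fixes \<Omega> :: "(real^2) set" and u :: "real^2 \<Rightarrow> real" and w :: "real^3"
    and n_r n_b C_r C_b :: real and t :: "real^2"
  assumes "open \<Omega>"
    and "1 < n_r" and "n_r < n_b"
    and "C2_on \<Omega> u"
    and "norm w = 1"
    and "\<forall>s\<in>\<Omega>. dist_c n_r C_r w u s > 0"
    and "\<forall>s\<in>\<Omega>. dist_c n_b C_b w u s > 0"
    and "t \<in> \<Omega>"
    and "fmap n_r C_r w u t = fmap n_b C_b w u t"
  shows "nu u t = e3"
proof -
  define dr where "dr = dist_c n_r C_r w u t"
  define db where "db = dist_c n_b C_b w u t"
  define mr where "mr = mdir n_r u t"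
  define mb where "mb = mdir n_b u t"
  have dr: "dr > 0" and db: "db > 0" using assms unfolding dr_def db_def by auto
  have nb1: "1 < n_b" using assms by simp
  have umr: "norm mr = 1" using mdir_unit[OF assms(2)] unfolding mr_def by (simp add: norm_eq_sqrt_inner)
  have umb: "norm mb = 1" using mdir_unit[OF nb1] unfolding mb_def by (simp add: norm_eq_sqrt_inner)
  have eq: "dr *\<^sub>R mr = db *\<^sub>R mb" using assms(9) unfolding fmap_def dr_def db_def mr_def mb_def by simp
  then have "norm (dr *\<^sub>R mr) = norm (db *\<^sub>R mb)" by simp
  then have "dr = db" using umr umb dr db by simp
  then have meq: "mr = mb" using eq dr by simp
  define lr where "lr = lam n_r u t"
  define lb where "lb = lam n_b u t"
  let ?v = "nu u t"
  have "(1/n_r) *\<^sub>R (e3 - lr *\<^sub>R ?v) = (1/n_b) *\<^sub>R (e3 - lb *\<^sub>R ?v)"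
    using meq unfolding mr_def mb_def mdir_def lr_def lb_def by simp
  then have "n_b *\<^sub>R (e3 - lr *\<^sub>R ?v) = n_r *\<^sub>R (e3 - lb *\<^sub>R ?v)"
  proof -
    assume h: "(1/n_r) *\<^sub>R (e3 - lr *\<^sub>R ?v) = (1/n_b) *\<^sub>R (e3 - lb *\<^sub>R ?v)"
    have "(n_r*n_b) *\<^sub>R ((1/n_r) *\<^sub>R (e3 - lr *\<^sub>R ?v)) = (n_r*n_b) *\<^sub>R ((1/n_b) *\<^sub>R (e3 - lb *\<^sub>R ?v))"
      using h by simp
    then show ?thesis using assms(2,3) by simp
  qed
  then have "(n_b - n_r) *\<^sub>R e3 = (n_b * lr - n_r * lb) *\<^sub>R ?v"
    by (simp add: algebra_simps)
  then have ek: "e3 = ((n_b * lr - n_r * lb) / (n_b - n_r)) *\<^sub>R ?v"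
  proof -
    assume h: "(n_b - n_r) *\<^sub>R e3 = (n_b * lr - n_r * lb) *\<^sub>R ?v"
    have "(1/(n_b - n_r)) *\<^sub>R ((n_b - n_r) *\<^sub>R e3) = (1/(n_b - n_r)) *\<^sub>R ((n_b * lr - n_r * lb) *\<^sub>R ?v)"
      using h by simp
    then show ?thesis using assms(3) by simp
  qed
  define k where "k = (n_b * lr - n_r * lb) / (n_b - n_r)"
  have ek2: "e3 = k *\<^sub>R ?v" using ek k_def by simp
  have "e3 \<bullet> ?v = k * (?v \<bullet> ?v)" by (metis ek2 inner_scaleR_left)
  then have kc: "e3 \<bullet> ?v = k" using nu_props(1) by simp
  have "e3 \<bullet> e3 = k * (e3 \<bullet> ?v)" by (metis ek2 inner_scaleR_right)
  then have "e3 \<bullet> e3 = k * k" using kc by simp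
  then have "k * k = 1" using nu_props(3) by simp
  moreover have "k > 0" using kc nu_props(2)[of u t] by simp
  ultimately have "(k - 1) * (k + 1) = 0" and "k + 1 \<noteq> 0" by (simp_all add: algebra_simps)
  then have "k = 1" by simp
  then show ?thesis using ek2 by simp
qed

end
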